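(* Let $0\le p_1<1/2<p_2\le 1$, $p_1'=\tfrac12(p_1+\tfrac12)$, $p_2'=\tfrac12(p_2+\tfrac12)$, and let $\ell$ be a positive integer such that $\log_2(2\ell)$ is an integer, $\ell(1/2-p_1)\ge 2\log_2(2\ell)+1$ and $\ell(p_2-1/2)\ge 2\log_2(2\ell)+1$. Let $\mathbf{x}=\mathbf{x}_1\mathbf{x}_2\in\mathcal{W}(2\ell,\ell,[p_1'\ell,p_2'\ell])$ with $\mathbf{x}_1,\mathbf{x}_2\in\{0,1\}^\ell$. Let $a=\mathrm{Syn}(\mathbf{x}_1)\bmod 2\ell$, let $\mathbf{p}$ be the binary representation of $a$ of length $\log_2(2\ell)$, and let $\mathbf{y}=\mathbf{x}_1(\mathbf{p}\,||\,\overline{\mathbf{p}})\mathbf{x}_2$. Then $\mathbf{y}\in\mathcal{W}(2\ell+2\log_2(2\ell),\ell,[p_1\ell,p_2\ell])$, i.e. every window of size $\ell$ of $\mathbf{y}$ has weight in $[p_1\ell,p_2\ell]$.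
   Context: $\mathrm{wt}(\mathbf{x})$ denotes the number of ones of a binary sequence; $\overline{\mathbf{p}}$ is the bitwise complement; juxtaposition denotes concatenation. For $\mathbf{y}=y_1\dots y_m$, $\mathbf{w}=w_1\dots w_m$, the interleaving is $\mathbf{y}\,||\,\mathbf{w}=y_1w_1\dots y_mw_m$. The VT syndrome of $\mathbf{x}=x_1\dots x_n$ is $\mathrm{Syn}(\mathbf{x})=\sum_{i=1}^n i\,x_i$. For reals $a\le b$ and $\ell\le n$, $\mathcal{W}(n,\ell,[a,b])$ is the set of $\mathbf{x}\in\{0,1\}^n$ all of whose windows $x_i\dots x_{i+\ell-1}$ ($1\le i\le n-\ell+1$) have weight in $[a,b]$. *)

theory Defs
  imports Complex_Main
begin

text \<open>Binary sequences are modelled as lists of booleans (True = 1).\<close>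

definition wt :: "bool list \<Rightarrow> nat" where
  "wt x = length (filter id x)"

definition compl :: "bool list \<Rightarrow> bool list" where
  "compl p = map Not p"

fun interleave :: "bool list \<Rightarrow> bool list \<Rightarrow> bool list" where
  "interleave (y # ys) (w # ws) = y # w # interleave ys ws"
| "interleave _ _ = []"

text \<open>VT syndrome, positions indexed from 1.\<close>
definition Syn :: "bool list \<Rightarrow> nat" where
  "Syn x = (\<Sum>i<length x. (i + 1) * (if x ! i then 1 else 0))"

text \<open>Binary representation of a of length m, most significant bit first.\<close>
definition bin_rep :: "nat \<Rightarrow> nat \<Rightarrow> bool list" where
  "bin_rep m a = map (\<lambda>i. odd (a div 2 ^ (m - 1 - i))) [0..<m]"

definition W :: "nat \<Rightarrow> nat \<Rightarrow> real \<Rightarrow> real \<Rightarrow> bool list set" where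
  "W n l a b = {x. length x = n \<and>
     (\<forall>i. i + l \<le> n \<longrightarrow> a \<le> real (wt (take l (drop i x))) \<and> real (wt (take l (drop i x))) \<le> b)}"

end

theory Submission
  imports Defs
begin

lemma wt_append[simp]: "wt (a @ b) = wt a + wt b"
  by (simp add: wt_def)

lemma wt_le_length: "wt x \<le> length x"
  by (simp add: wt_def)

lemma wt_take_diff:
  assumes "j \<le> k"
  shows "wt (take j x) \<le> wt (take k x) \<and> wt (take k x) \<le> wt (take j x) + (k - j)"
proof -
  have "take k x = take j x @ take (k - j) (drop j x)"
    using assms by (metis le_add_diff_inverse take_add)
  moreover have "wt (take (k - j) (drop j x)) \<le> k - j"
    using wt_le_length[of "take (k - j) (drop j x)"] by simp
  ultimately show ?thesis by simp
qed

lemma compl_Cons[simp]: "compl (a # p) = (\<not> a) # compl p"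
  by (simp add: compl_def)

lemma compl_Nil[simp]: "compl [] = []"
  by (simp add: compl_def)

lemma length_inter: "length (interleave p (compl p)) = 2 * length p"
  by (induction p) auto

lemma wt_inter:
  "min j (2 * length p) div 2 \<le> wt (take j (interleave p (compl p))) \<and>
   wt (take j (interleave p (compl p))) \<le> (min j (2 * length p) + 1) div 2"
proof (induction p arbitrary: j)
  case Nil
  then show ?case by (simp add: wt_def)
next
  case (Cons a p)
  show ?case
  proof (cases j)
    case 0
    then show ?thesis by (simp add: wt_def)
  next
    case (Suc j1)
    show ?thesis
    proof (cases j1)
      case 0
      then show ?thesis using Suc by (simp add: wt_def)
    next
      case (Suc j2)
      have e: "wt (take j (interleave (a # p) (compl (a # p)))) = 1 + wt (take j2 (interleave p (compl p)))"
        using \<open>j = Suc j1\<close> Suc by (simp add: wt_def)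
      have "min j (2 * length (a # p)) = 2 + min j2 (2 * length p)"
        using \<open>j = Suc j1\<close> Suc by simp
      then show ?thesis using e Cons.IH[of j2] by simp
    qed
  qed
qed

lemma length_bin_rep[simp]: "length (bin_rep m a) = m"
  by (simp add: bin_rep_def)

lemma window_lemma:
  fixes x1 x2 z :: "bool list"
  assumes lx1: "length x1 = l" and lx2: "length x2 = l" and lz: "length z = 2 * m"
    and ml: "2 * m \<le> l"
    and hz: "\<And>j. min j (2 * m) div 2 \<le> wt (take j z) \<and> wt (take j z) \<le> (min j (2 * m) + 1) div 2"
    and i: "i + l \<le> 2 * l + 2 * m"
  shows "\<exists>i'. i' \<le> l \<and> wt (take l (drop i' (x1 @ x2))) \<le> wt (take l (drop i (x1 @ z @ x2))) + m
           \<and> wt (take l (drop i (x1 @ z @ x2))) \<le> wt (take l (drop i' (x1 @ x2))) + m"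
proof -
  have sy: "wt (take (i + l) (x1 @ z @ x2)) = wt (take i (x1 @ z @ x2)) + wt (take l (drop i (x1 @ z @ x2)))"
    by (simp only: take_add wt_append)
  show ?thesis
  proof (cases "i \<le> l")
    case True
    have sx: "wt (take (i + l) (x1 @ x2)) = wt (take i (x1 @ x2)) + wt (take l (drop i (x1 @ x2)))"
      by (simp only: take_add wt_append)
    have a1: "wt (take (i + l) (x1 @ z @ x2)) = wt x1 + wt (take i z) + wt (take (i - 2 * m) x2)"
      using lx1 lz True by simp
    have a2: "wt (take i (x1 @ z @ x2)) = wt (take i x1)"
      using lx1 True by simp
    have a3: "wt (take (i + l) (x1 @ x2)) = wt x1 + wt (take i x2)"
      using lx1 True by simp
    have a4: "wt (take i (x1 @ x2)) = wt (take i x1)"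
      using lx1 True by simp
    have g: "wt (take (i - 2 * m) x2) \<le> wt (take i x2) \<and> wt (take i x2) \<le> wt (take (i - 2 * m) x2) + (i - (i - 2 * m))"
      by (rule wt_take_diff) simp
    have h: "min i (2 * m) div 2 \<le> wt (take i z) \<and> wt (take i z) \<le> (min i (2 * m) + 1) div 2"
      by (rule hz)
    show ?thesis
      apply (rule exI[of _ i])
      using sy sx a1 a2 a3 a4 g h True by linarith
  next
    case False
    have sx: "wt (take l (drop l (x1 @ x2))) = wt x2"
      using lx1 lx2 by simp
    have a1: "wt (take (i + l) (x1 @ z @ x2)) = wt x1 + wt z + wt (take (i - 2 * m) x2)"
      using lx1 lz False ml by simp
    have a2: "wt (take i (x1 @ z @ x2)) = wt x1 + wt (take (i - l) z)"
      using lx1 lz False i by simp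
    have g: "wt (take (i - 2 * m) x2) \<le> wt (take l x2) \<and> wt (take l x2) \<le> wt (take (i - 2 * m) x2) + (l - (i - 2 * m))"
      by (rule wt_take_diff) (use i in simp)
    have tl: "take l x2 = x2" using lx2 by simp
    have h: "min (i - l) (2 * m) div 2 \<le> wt (take (i - l) z) \<and> wt (take (i - l) z) \<le> (min (i - l) (2 * m) + 1) div 2"
      by (rule hz)
    have hm: "min (2*m) (2 * m) div 2 \<le> wt (take (2*m) z) \<and> wt (take (2*m) z) \<le> (min (2*m) (2 * m) + 1) div 2"
      by (rule hz)
    have wz: "wt z = m" using hm lz by simp
    show ?thesis
      apply (rule exI[of _ l])
      using sy sx a1 a2 g h wz False i tl by (simp only:) linarith
  qed
qed

theorem corollary3:
  fixes p1 p2 :: real and l :: nat and x1 x2 :: "bool list"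
  assumes "0 \<le> p1" and "p1 < 1/2" and "1/2 < p2" and "p2 \<le> 1"
    and "0 < l"
    and "log 2 (2 * real l) \<in> \<int>"
    and "real l * (1/2 - p1) \<ge> 2 * log 2 (2 * real l) + 1"
    and "real l * (p2 - 1/2) \<ge> 2 * log 2 (2 * real l) + 1"
    and "length x1 = l" and "length x2 = l"
    and "x1 @ x2 \<in> W (2 * l) l (((p1 + 1/2) / 2) * real l) (((p2 + 1/2) / 2) * real l)"
  shows "let m = nat \<lfloor>log 2 (2 * real l)\<rfloor>;
             a = Syn x1 mod (2 * l);
             p = bin_rep m a;
             y = x1 @ interleave p (compl p) @ x2
         in y \<in> W (2 * l + 2 * m) l (p1 * real l) (p2 * real l)"
proof -
  define m where "m = nat \<lfloor>log 2 (2 * real l)\<rfloor>"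
  define p where "p = bin_rep m (Syn x1 mod (2 * l))"
  define z where "z = interleave p (compl p)"
  obtain k where k: "log 2 (2 * real l) = of_int k" using assms(6) Ints_cases by blast
  have "log 2 (2 * real l) \<ge> log 2 2" using assms(5) by simp
  then have "k \<ge> 1" using k by simp
  then have rm: "real m = log 2 (2 * real l)" unfolding m_def using k by simp
  have lz: "length z = 2 * m" unfolding z_def p_def by (simp add: length_inter)
  have hz: "\<And>j. min j (2 * m) div 2 \<le> wt (take j z) \<and> wt (take j z) \<le> (min j (2 * m) + 1) div 2"
    unfolding z_def using wt_inter[of _ p] unfolding p_def by simp
  have A: "real l * (1/2 - p1) \<ge> 2 * real m + 1" using assms(7) rm by simp
  have B: "real l * (p2 - 1/2) \<ge> 2 * real m + 1" using assms(8) rm by simp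
  have "real l * (1/2 - p1) \<le> real l / 2" using assms(1) by (simp add: field_simps)
  then have ml: "2 * m \<le> l" using A by linarith
  have "x1 @ z @ x2 \<in> W (2 * l + 2 * m) l (p1 * real l) (p2 * real l)"
    unfolding W_def
  proof (intro CollectI conjI allI impI)
    show "length (x1 @ z @ x2) = 2 * l + 2 * m" using assms(9,10) lz by simp
  next
    fix i assume i: "i + l \<le> 2 * l + 2 * m"
    obtain i' where i': "i' \<le> l"
      and b1: "wt (take l (drop i' (x1 @ x2))) \<le> wt (take l (drop i (x1 @ z @ x2))) + m"
      and b2: "wt (take l (drop i (x1 @ z @ x2))) \<le> wt (take l (drop i' (x1 @ x2))) + m"
      using window_lemma[OF assms(9,10) lz ml hz i] by blast
    have wx: "((p1 + 1/2) / 2) * real l \<le> real (wt (take l (drop i' (x1 @ x2))))"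
      "real (wt (take l (drop i' (x1 @ x2)))) \<le> ((p2 + 1/2) / 2) * real l"
      using assms(11) i' unfolding W_def by auto
    have r1: "real (wt (take l (drop i' (x1 @ x2)))) \<le> real (wt (take l (drop i (x1 @ z @ x2)))) + real m"
      using b1 by linarith
    have r2: "real (wt (take l (drop i (x1 @ z @ x2)))) \<le> real (wt (take l (drop i' (x1 @ x2)))) + real m"
      using b2 by linarith
    have e1: "((p1 + 1/2) / 2) * real l = p1 * real l + real l * (1/2 - p1) / 2" by (simp add: field_simps)
    have e2: "((p2 + 1/2) / 2) * real l = p2 * real l - real l * (p2 - 1/2) / 2" by (simp add: field_simps)
    show "p1 * real l \<le> real (wt (take l (drop i (x1 @ z @ x2))))"
      using wx(1) r1 e1 A by linarith
    show "real (wt (take l (drop i (x1 @ z @ x2)))) \<le> p2 * real l"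
      using wx(2) r2 e2 B by linarith
  qed
  then show ?thesis unfolding m_def[symmetric] p_def[symmetric] z_def[symmetric] Let_def by simp
qed

end
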